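(* Let $\mathbf c=(c_0,\dots,c_m)$ and $\mathbf d=(d_0,\dots,d_n)$ be degree sequences, and let $A=\Delta(\mathbf c)$, $B=\Delta(\mathbf d)$. Then \[\pi(\mathbf c)\cdot\pi(\mathbf d)=\sum_{\sigma\in\mathrm{Sh}(A,B)}\pi\big(\Sigma(\sigma,c_0+d_0)\big).\] More generally, for degree sequences $\mathbf d^1,\dots,\mathbf d^r$ with $\mathbf d^i=(d^i_0,\dots)$ and $A_i=\Delta(\mathbf d^i)$, \[\prod_{i=1}^r\pi(\mathbf d^i)=\sum_{\sigma\in\mathrm{Sh}(A_1,\dots,A_r)}\pi\big(\Sigma(\sigma,d^1_0+\cdots+d^r_0)\big).\]
   Context: A diagram is a finitely supported function $\mathbb Z_{\ge0}\times\mathbb Z\to\mathbb Q$, $(i,j)\mapsto\beta_{i,j}$. The (tensor) product of diagrams is $(\beta\cdot\beta')_{i,j}=\sum_{i_1+i_2=i,\ j_1+j_2=j}\beta_{i_1,j_1}\beta'_{i_2,j_2}$. A degree sequence is $\mathbf d=(d_0,\dots,d_c)\in\mathbb Z^{c+1}$ with $d_0<\cdots<d_c$. The pure diagram $\pi(\mathbf d)$ has entries $\pi(\mathbf d)_{i,j}=\prod_{k\ne i}\frac1{|d_i-d_k|}$ if $0\le i\le c$ and $j=d_i$, and $0$ otherwise. The first difference is $\Delta(\mathbf d)=(d_1-d_0,d_2-d_1,\dots,d_c-d_{c-1})$. For a sequence $s=(s_1,\dots,s_p)$ and an integer $e$, $\Sigma(s,e)=(e,e+s_1,e+s_1+s_2,\dots,e+s_1+\cdots+s_p)$.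 For finite sequences $A_1,\dots,A_r$, $\mathrm{Sh}(A_1,\dots,A_r)$ is the set of shuffles: sequences obtained by interleaving the entries of $A_1,\dots,A_r$ so that the relative order of the entries of each $A_i$ is preserved (shuffles are distinguished by which positions are occupied by entries of which $A_i$, so they are counted with multiplicity even if entries coincide). *)

theory Defs
  imports Main "HOL.Rat"
begin

text \<open>A diagram is a function nat => int => rat (meant to be finitely supported).\<close>
type_synonym diagram = "nat \<Rightarrow> int \<Rightarrow> rat"

definition dsupp :: "diagram \<Rightarrow> (nat \<times> int) set" where
  "dsupp b = {p. b (fst p) (snd p) \<noteq> 0}"

definition dprod :: "diagram \<Rightarrow> diagram \<Rightarrow> diagram" where
  "dprod b b' i j = (\<Sum>(p, q) \<in> {(p, q). p \<in> dsupp b \<and> q \<in> dsupp b' \<and>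
       fst p + fst q = i \<and> snd p + snd q = j}.
       b (fst p) (snd p) * b' (fst q) (snd q))"

definition dunit :: diagram where
  "dunit i j = (if i = 0 \<and> j = 0 then 1 else 0)"

definition dprod_list :: "diagram list \<Rightarrow> diagram" where
  "dprod_list bs = foldr dprod bs dunit"

definition degree_seq :: "int list \<Rightarrow> bool" where
  "degree_seq d \<longleftrightarrow> d \<noteq> [] \<and> sorted_wrt (<) d"

definition pure :: "int list \<Rightarrow> diagram" where
  "pure d i j = (if i < length d \<and> j = d ! i
      then (\<Prod>k \<in> {0..<length d} - {i}. 1 / of_int \<bar>d ! i - d ! k\<bar>) else 0)"

definition Delta :: "int list \<Rightarrow> int list" where
  "Delta d = map (\<lambda>k. d ! (k + 1) - d ! k) [0..<length d - 1]"

definition Sigma_seq :: "int list \<Rightarrow> int \<Rightarrow> int list" where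
  "Sigma_seq s e = map (\<lambda>k. e + sum_list (take k s)) [0..<length s + 1]"

text \<open>Shuffles of A_1,...,A_r are encoded by words w over {0..<r} in which letter i occurs
  exactly length A_i times (w records which list each position is taken from);
  this counts shuffles with multiplicity as required.\<close>
definition shuffle_words :: "'a list list \<Rightarrow> nat list set" where
  "shuffle_words As = {w. set w \<subseteq> {..<length As} \<and>
      (\<forall>i < length As. count_list w i = length (As ! i))}"

fun interleave :: "nat list \<Rightarrow> 'a list list \<Rightarrow> 'a list" where
  "interleave [] As = []"
| "interleave (i # w) As = hd (As ! i) # interleave w (As[i := tl (As ! i)])"

end

theory Submission imports Defs begin

definition Wd :: "nat \<Rightarrow> (nat \<Rightarrow> nat) \<Rightarrow> nat list set" where
  "Wd r c = {u. set u \<subseteq> {..<r} \<and> (\<forall>t<r. count_list u t = c t)}"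

lemma count_sum: "set (xs::nat list) \<subseteq> {..<r} \<Longrightarrow> (\<Sum>t<r. count_list xs t) = length xs"
proof (induction xs)
  case Nil then show ?case by simp
next
  case (Cons x xs)
  have "(\<Sum>t<r. count_list (x#xs) t) = (\<Sum>t<r. count_list xs t + (if x = t then 1 else 0))"
    by (intro sum.cong) auto
  also have "\<dots> = (\<Sum>t<r. count_list xs t) + (\<Sum>t<r. (if x = t then 1 else 0))"
    by (simp add: sum.distrib)
  also have "(\<Sum>t<r. (if x = t then 1 else 0)) = (1::nat)"
    using Cons.prems by (subst sum.delta') auto
  also have "(\<Sum>t<r. count_list xs t) = length xs" using Cons by simp
  finally show ?case by simp
qed

lemma Wd_length: "u \<in> Wd r c \<Longrightarrow> length u = (\<Sum>t<r. c t)"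
  unfolding Wd_def using count_sum[of u r] by auto

lemma Wd_finite: "finite (Wd r c)"
proof -
  have "Wd r c \<subseteq> {xs. set xs \<subseteq> {..<r} \<and> length xs = (\<Sum>t<r. c t)}"
    using Wd_length by (auto simp: Wd_def)
  moreover have "finite {xs. set xs \<subseteq> {..<r} \<and> length xs = (\<Sum>t<r. c t)}"
    by (rule finite_lists_length_eq) simp
  ultimately show ?thesis by (rule finite_subset)
qed

lemma Wd_last:
  assumes "0 < c t" "t < r"
  shows "{v \<in> Wd r c. last v = t} = (\<lambda>v'. v' @ [t]) ` Wd r (c(t := c t - 1))"
proof (intro equalityI subsetI)
  fix v assume v: "v \<in> {v \<in> Wd r c. last v = t}"
  have "count_list v t > 0" using v assms by (auto simp: Wd_def)
  then have "v \<noteq> []" by auto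
  then have eq: "v = butlast v @ [t]" using v append_butlast_last_id[of v] by simp
  have "butlast v \<in> Wd r (c(t := c t - 1))"
  proof -
    have "set (butlast v) \<subseteq> {..<r}" using v by (auto simp: Wd_def dest: in_set_butlastD)
    moreover have "count_list (butlast v) s = (c(t := c t - 1)) s" if "s < r" for s
    proof -
      have "count_list v s = c s" using v that by (auto simp: Wd_def)
      then have "count_list (butlast v @ [t]) s = c s" using eq by simp
      then show ?thesis by (auto split: if_splits)
    qed
    ultimately show ?thesis by (auto simp: Wd_def)
  qed
  then show "v \<in> (\<lambda>v'. v' @ [t]) ` Wd r (c(t := c t - 1))" using eq by blast
next
  fix v assume "v \<in> (\<lambda>v'. v' @ [t]) ` Wd r (c(t := c t - 1))"
  then obtain v' where v: "v = v' @ [t]" "v' \<in> Wd r (c(t := c t - 1))" by blast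
  show "v \<in> {v \<in> Wd r c. last v = t}"
    using v assms by (auto simp: Wd_def split: if_splits)
qed

lemma Wd_zero: "(\<forall>t<r. c t = 0) \<Longrightarrow> Wd r c = {[]}"
proof (intro equalityI subsetI)
  fix v assume "\<forall>t<r. c t = 0" "v \<in> Wd r c"
  then have "length v = 0" using Wd_length[of v r c] by simp
  then show "v \<in> {[]}" by simp
qed (auto simp: Wd_def)

lemma chen_aux:
  fixes g :: "nat \<Rightarrow> nat \<Rightarrow> rat"
  assumes g0: "\<forall>t<r. g t 0 = 0"
  shows "(\<Sum>t<r. c t) = N \<Longrightarrow> (\<forall>t<r. \<forall>k. 1 \<le> k \<and> k \<le> c t \<longrightarrow> g t k > 0) \<Longrightarrow>
    (\<Sum>v\<in>Wd r c. \<Prod>k\<in>{1..length v}. 1 / (\<Sum>t<r. g t (count_list (take k v) t)))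
     = (\<Prod>t<r. \<Prod>k\<in>{1..c t}. 1 / g t k)"
proof (induction N arbitrary: c)
  case 0
  then have z: "\<forall>t<r. c t = 0" by simp
  then show ?case by (simp add: Wd_zero)
next
  case (Suc M)
  define F where "F v = (\<Prod>k\<in>{1..length v}. 1 / (\<Sum>t<r. g t (count_list (take k v) t)))" for v
  define P where "P c' = (\<Prod>t<r. \<Prod>k\<in>{1..c' t}. 1 / g t k)" for c'
  define G where "G = (\<Sum>t<r. g t (c t))"
  have gnn: "g t (c t) \<ge> 0" if "t < r" for t
    using Suc.prems(2) g0 that by (cases "c t = 0") (auto intro: less_imp_le)
  have "\<exists>t<r. c t > 0"
  proof (rule ccontr)
    assume "\<not> (\<exists>t<r. c t > 0)"
    then have "\<forall>t<r. c t = 0" by auto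
    then have "(\<Sum>t<r. c t) = 0" by simp
    then show False using Suc.prems(1) by simp
  qed
  then obtain t0 where t0: "t0 < r" "c t0 > 0" by blast
  have gt0: "0 < g t0 (c t0)" using Suc.prems(2) t0 by auto
  have Gpos: "G > 0" unfolding G_def
    by (rule sum_pos2[of "{..<r}" t0]) (use t0 gt0 gnn in auto)
  have inner: "(\<Sum>v\<in>{v \<in> Wd r c. last v = t}. F v) = P c * g t (c t) / G" if t: "t < r" for t
  proof (cases "c t = 0")
    case True
    have e: "{v \<in> Wd r c. last v = t} = {}"
    proof -
      have "last v \<noteq> t" if v: "v \<in> Wd r c" for v
      proof -
        have "count_list v t = 0" using v True t by (auto simp: Wd_def)
        then have "t \<notin> set v" by (simp add: count_list_0_iff)
        moreover have "length v = Suc M" using Wd_length[OF v] Suc.prems(1) by simp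
        then have "last v \<in> set v" by (cases v) auto
        ultimately show ?thesis by metis
      qed
      then show ?thesis by blast
    qed
    show ?thesis unfolding e using True g0 t by simp
  next
    case False
    define c' where "c' = c(t := c t - 1)"
    have sc': "(\<Sum>t<r. c' t) = M"
    proof -
      have "(\<Sum>s<r. c s) = c t + (\<Sum>s\<in>{..<r}-{t}. c s)"
        using t by (simp add: sum.remove)
      moreover have "(\<Sum>s<r. c' s) = c' t + (\<Sum>s\<in>{..<r}-{t}. c' s)"
        using t by (simp add: sum.remove)
      moreover have "(\<Sum>s\<in>{..<r}-{t}. c' s) = (\<Sum>s\<in>{..<r}-{t}. c s)"
        unfolding c'_def by (intro sum.cong) auto
      moreover have "c' t + 1 = c t" using False unfolding c'_def by simp
      ultimately have "(\<Sum>s<r. c s) = (\<Sum>s<r. c' s) + 1" by simp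
      then show ?thesis using Suc.prems(1) by simp
    qed
    have pc': "\<forall>s<r. \<forall>k. 1 \<le> k \<and> k \<le> c' s \<longrightarrow> g s k > 0"
      using Suc.prems(2) unfolding c'_def by auto
    have IH: "(\<Sum>v\<in>Wd r c'. F v) = P c'" using Suc.IH[OF sc' pc'] unfolding F_def P_def .
    have Fapp: "F (v' @ [t]) = F v' / G" if "v' \<in> Wd r c'" for v'
    proof -
      have lv: "length (v' @ [t]) = Suc (length v')" by simp
      have "F (v' @ [t]) = (\<Prod>k\<in>{1..length v'}. 1 / (\<Sum>t<r. g t (count_list (take k (v' @ [t])) t)))
            * (1 / (\<Sum>s<r. g s (count_list (v' @ [t]) s)))"
        unfolding F_def lv by (simp add: prod.cl_ivl_Suc)
      also have "(\<Sum>s<r. g s (count_list (v' @ [t]) s)) = G"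
      proof -
        have "count_list (v'@[t]) s = c s" if "s<r" for s
        proof -
          have "count_list v' s = c' s" using \<open>v' \<in> Wd r c'\<close> that by (simp add: Wd_def)
          then show ?thesis using False by (cases "s = t") (auto simp: c'_def)
        qed
        then show ?thesis unfolding G_def by (intro sum.cong) auto
      qed
      also have "(\<Prod>k\<in>{1..length v'}. 1 / (\<Sum>t<r. g t (count_list (take k (v' @ [t])) t))) = F v'"
        unfolding F_def by (intro prod.cong) auto
      finally show ?thesis by simp
    qed
    have Pc: "P c = P c' * (1 / g t (c t))"
    proof -
      have "P c = (\<Prod>k\<in>{1..c t}. 1 / g t k) * (\<Prod>s\<in>{..<r}-{t}. \<Prod>k\<in>{1..c s}. 1 / g s k)"
        unfolding P_def using t by (simp add: prod.remove)
      also have "(\<Prod>k\<in>{1..c t}. 1 / g t k) = (\<Prod>k\<in>{1..c' t}. 1 / g t k) * (1 / g t (c t))"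
      proof -
        have "c t = Suc (c' t)" using False by (simp add: c'_def)
        then show ?thesis by (simp add: prod.cl_ivl_Suc)
      qed
      also have "(\<Prod>s\<in>{..<r}-{t}. \<Prod>k\<in>{1..c s}. 1 / g s k) = (\<Prod>s\<in>{..<r}-{t}. \<Prod>k\<in>{1..c' s}. 1 / g s k)"
        unfolding c'_def by (intro prod.cong) auto
      also have "(\<Prod>k\<in>{1..c' t}. 1 / g t k) * (1 / g t (c t)) * \<dots> = P c' * (1 / g t (c t))"
        unfolding P_def using t by (simp add: prod.remove)
      finally show ?thesis .
    qed
    have gp: "g t (c t) \<noteq> 0" using Suc.prems(2)[rule_format, of t "c t"] t False by auto
    have "(\<Sum>v\<in>{v \<in> Wd r c. last v = t}. F v) = (\<Sum>v'\<in>Wd r c'. F (v' @ [t]))"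
    proof -
      have "0 < c t" using False by simp
      then show ?thesis unfolding Wd_last[of c t r, OF \<open>0 < c t\<close> t] c'_def
        by (subst sum.reindex) (auto simp: inj_on_def)
    qed
    also have "\<dots> = (\<Sum>v'\<in>Wd r c'. F v' / G)" using Fapp by simp
    also have "\<dots> = P c' / G" using IH by (simp add: sum_divide_distrib[symmetric])
    also have "\<dots> = P c * g t (c t) / G" using Pc gp by simp
    finally show ?thesis .
  qed
  have "(\<Sum>v\<in>Wd r c. F v) = (\<Sum>t<r. \<Sum>v\<in>{v \<in> Wd r c. last v = t}. F v)"
  proof (rule sum.group[symmetric])
    show "finite (Wd r c)" by (rule Wd_finite)
    show "last ` Wd r c \<subseteq> {..<r}"
    proof
      fix x assume "x \<in> last ` Wd r c"
      then obtain v where v: "v \<in> Wd r c" "x = last v" by blast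
      then have "length v = Suc M" using Wd_length Suc.prems(1) by metis
      then have "v \<noteq> []" by auto
      then have "last v \<in> set v" by simp
      then show "x \<in> {..<r}" using v unfolding Wd_def by blast
    qed
  qed simp
  also have "\<dots> = (\<Sum>t<r. P c * g t (c t) / G)" using inner by simp
  also have "\<dots> = P c * G / G" unfolding G_def
    by (simp add: sum_divide_distrib[symmetric] sum_distrib_left)
  also have "\<dots> = P c" using Gpos by simp
  finally show ?case unfolding F_def P_def .
qed

lemma chen:
  fixes g :: "nat \<Rightarrow> nat \<Rightarrow> rat"
  assumes "\<forall>t<r. g t 0 = 0" "\<forall>t<r. \<forall>k. 1 \<le> k \<and> k \<le> c t \<longrightarrow> g t k > 0"
  shows "(\<Sum>v\<in>Wd r c. \<Prod>k\<in>{1..length v}. 1 / (\<Sum>t<r. g t (count_list (take k v) t)))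
     = (\<Prod>t<r. \<Prod>k\<in>{1..c t}. 1 / g t k)"
  using chen_aux[OF assms(1) refl assms(2)] .


definition pv :: "int list \<Rightarrow> nat \<Rightarrow> rat" where
  "pv d a = (\<Prod>l\<in>{0..<length d}-{a}. 1 / of_int \<bar>d!a - d!l\<bar>)"

lemma pure_eq: "pure d i j = (if i < length d \<and> j = d!i then pv d i else 0)"
  by (simp add: pure_def pv_def)

lemma dprod_fin:
  assumes "finite (dsupp b)"
  shows "dprod b b' i j = (\<Sum>p\<in>{p\<in>dsupp b. fst p \<le> i}. b (fst p) (snd p) * b' (i - fst p) (j - snd p))"
proof -
  define E where "E = {p\<in>dsupp b. fst p \<le> i \<and> (i - fst p, j - snd p) \<in> dsupp b'}"
  have D: "{(p, q). p \<in> dsupp b \<and> q \<in> dsupp b' \<and> fst p + fst q = i \<and> snd p + snd q = j}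
      = (\<lambda>p. (p, (i - fst p, j - snd p))) ` E"
    unfolding E_def by (auto simp: image_iff)
  have "dprod b b' i j = (\<Sum>p\<in>E. b (fst p) (snd p) * b' (i - fst p) (j - snd p))"
    unfolding dprod_def D by (subst sum.reindex) (auto simp: inj_on_def)
  also have "\<dots> = (\<Sum>p\<in>{p\<in>dsupp b. fst p \<le> i}. b (fst p) (snd p) * b' (i - fst p) (j - snd p))"
    by (rule sum.mono_neutral_left) (use assms in \<open>auto simp: E_def dsupp_def\<close>)
  finally show ?thesis .
qed

lemma dsupp_pure: "dsupp (pure d) \<subseteq> (\<lambda>k. (k, d!k)) ` {..<length d}"
  by (auto simp: dsupp_def pure_eq split: if_splits)

lemma dprod_pure:
  "dprod (pure d) b' i j = (\<Sum>k | k < length d \<and> k \<le> i. pv d k * b' (i-k) (j - d!k))"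
proof -
  have fin: "finite (dsupp (pure d))" using dsupp_pure by (rule finite_subset) simp
  have "dprod (pure d) b' i j = (\<Sum>p\<in>{p\<in>dsupp (pure d). fst p \<le> i}. pure d (fst p) (snd p) * b' (i - fst p) (j - snd p))"
    by (rule dprod_fin[OF fin])
  also have "\<dots> = (\<Sum>p\<in>{p\<in>(\<lambda>k. (k, d!k)) ` {..<length d}. fst p \<le> i}. pure d (fst p) (snd p) * b' (i - fst p) (j - snd p))"
    by (rule sum.mono_neutral_left) (use dsupp_pure in \<open>auto simp: dsupp_def\<close>)
  also have "{p\<in>(\<lambda>k. (k, d!k)) ` {..<length d}. fst p \<le> i} = (\<lambda>k. (k, d!k)) ` {k. k < length d \<and> k \<le> i}"
    by auto
  also have "(\<Sum>p\<in>\<dots>. pure d (fst p) (snd p) * b' (i - fst p) (j - snd p))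
      = (\<Sum>k | k < length d \<and> k \<le> i. pv d k * b' (i-k) (j - d!k))"
    by (subst sum.reindex) (auto simp: inj_on_def pure_eq intro!: sum.cong)
  finally show ?thesis .
qed

definition BX :: "int list list \<Rightarrow> nat \<Rightarrow> int \<Rightarrow> nat list set" where
  "BX ds i j = {a. length a = length ds \<and> (\<forall>t<length ds. a!t < length (ds!t)) \<and> sum_list a = i
     \<and> (\<Sum>t<length ds. ds!t!(a!t)) = j}"

lemma BX_finite: "finite (BX ds i j)"
proof -
  have "BX ds i j \<subseteq> {a. set a \<subseteq> {..i} \<and> length a = length ds}"
    by (auto simp: BX_def intro: member_le_sum_list)
  moreover have "finite {a. set a \<subseteq> {..i} \<and> length a = length ds}"
    by (rule finite_lists_length_eq) simp
  ultimately show ?thesis by (rule finite_subset)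
qed

lemma BX_Cons: "BX (d # ds) i j = (\<lambda>(k, a'). k # a') ` (SIGMA k:{k. k < length d \<and> k \<le> i}. BX ds (i - k) (j - d!k))"
proof (intro equalityI subsetI)
  fix a assume a: "a \<in> BX (d # ds) i j"
  then obtain k a' where ka: "a = k # a'" by (cases a) (auto simp: BX_def)
  have s: "(\<Sum>t<length (d#ds). (d#ds)!t!(a!t)) = d!k + (\<Sum>t<length ds. ds!t!(a'!t))"
    unfolding ka length_Cons sum.lessThan_Suc_shift by simp
  have "k < length d" using a ka by (auto simp: BX_def)
  moreover have "k \<le> i" using a ka by (auto simp: BX_def)
  moreover have "a' \<in> BX ds (i - k) (j - d!k)"
    using a s unfolding ka BX_def by (auto simp: nth_Cons_Suc)
  ultimately show "a \<in> (\<lambda>(k, a'). k # a') ` (SIGMA k:{k. k < length d \<and> k \<le> i}. BX ds (i - k) (j - d!k))"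
    using ka by blast
next
  fix a assume "a \<in> (\<lambda>(k, a'). k # a') ` (SIGMA k:{k. k < length d \<and> k \<le> i}. BX ds (i - k) (j - d!k))"
  then obtain k a' where ka: "a = k # a'" "k < length d" "k \<le> i" "a' \<in> BX ds (i - k) (j - d!k)" by auto
  have s: "(\<Sum>t<length (d#ds). (d#ds)!t!(a!t)) = d!k + (\<Sum>t<length ds. ds!t!(a'!t))"
    unfolding ka length_Cons sum.lessThan_Suc_shift by simp
  show "a \<in> BX (d # ds) i j"
    using ka s unfolding BX_def by (auto simp: nth_Cons split: nat.splits)
qed

lemma LHS:
  "dprod_list (map pure ds) i j = (\<Sum>a\<in>BX ds i j. \<Prod>t<length ds. pv (ds!t) (a!t))"
proof (induction ds arbitrary: i j)
  case Nil
  have "BX [] i j = (if i = 0 \<and> j = 0 then {[]} else {})" by (auto simp: BX_def)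
  then show ?case by (simp add: dprod_list_def dunit_def)
next
  case (Cons d ds)
  have "dprod_list (map pure (d # ds)) i j = dprod (pure d) (dprod_list (map pure ds)) i j"
    by (simp add: dprod_list_def)
  also have "\<dots> = (\<Sum>k | k < length d \<and> k \<le> i. pv d k * (\<Sum>a\<in>BX ds (i-k) (j - d!k). \<Prod>t<length ds. pv (ds!t) (a!t)))"
    by (simp add: dprod_pure Cons.IH)
  also have "\<dots> = (\<Sum>k | k < length d \<and> k \<le> i. \<Sum>a\<in>BX ds (i-k) (j - d!k). pv d k * (\<Prod>t<length ds. pv (ds!t) (a!t)))"
    by (simp add: sum_distrib_left)
  also have "\<dots> = (\<Sum>(k,a)\<in>(SIGMA k:{k. k < length d \<and> k \<le> i}. BX ds (i - k) (j - d!k)). pv d k * (\<Prod>t<length ds. pv (ds!t) (a!t)))"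
    by (rule sum.Sigma) (auto simp: BX_finite)
  also have "\<dots> = (\<Sum>a\<in>BX (d # ds) i j. \<Prod>t<length (d#ds). pv ((d#ds)!t) (a!t))"
    unfolding BX_Cons by (subst sum.reindex) (auto simp: inj_on_def prod.lessThan_Suc_shift simp del: prod.lessThan_Suc intro!: sum.cong)
  finally show ?case .
qed


lemma length_Delta[simp]: "length (Delta d) = length d - 1"
  by (simp add: Delta_def)

lemma sum_take_Delta: "k < length d \<Longrightarrow> sum_list (take k (Delta d)) = d!k - d!0"
proof (induction k)
  case 0 then show ?case by simp
next
  case (Suc k)
  have "take (Suc k) (Delta d) = take k (Delta d) @ [Delta d ! k]"
    using Suc.prems by (simp add: take_Suc_conv_app_nth)
  moreover have "Delta d ! k = d!(k+1) - d!k"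
  proof -
    have "k < length d - 1" using Suc.prems by simp
    then show ?thesis by (simp add: Delta_def)
  qed
  ultimately show ?case using Suc by simp
qed

lemma length_interleave[simp]: "length (interleave w As) = length w"
  by (induction w arbitrary: As) auto

lemma take_interleave: "take p (interleave w As) = interleave (take p w) As"
  by (induction w arbitrary: p As) (auto simp: take_Cons split: nat.splits)

lemma sum_interleave:
  fixes As :: "int list list"
  assumes "set w \<subseteq> {..<length As}" "\<forall>t<length As. count_list w t \<le> length (As!t)"
  shows "sum_list (interleave w As) = (\<Sum>t<length As. sum_list (take (count_list w t) (As!t)))"
  using assms
proof (induction w arbitrary: As)
  case Nil then show ?case by simp
next
  case (Cons x w)
  define As' where "As' = As[x := tl (As!x)]"
  have x: "x < length As" using Cons.prems by auto
  have cx: "count_list (x#w) x \<le> length (As!x)" using Cons.prems x by blast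
  then obtain y ys where yys: "As!x = y # ys" by (cases "As!x") auto
  have l: "length As' = length As" by (simp add: As'_def)
  have IHp: "\<forall>t<length As'. count_list w t \<le> length (As'!t)"
  proof (intro allI impI)
    fix t assume t: "t < length As'"
    show "count_list w t \<le> length (As'!t)"
    proof (cases "t = x")
      case True then show ?thesis using cx yys x by (simp add: As'_def)
    next
      case False then show ?thesis using Cons.prems(2) t l by (auto simp: As'_def split: if_splits)
    qed
  qed
  have IH: "sum_list (interleave w As') = (\<Sum>t<length As. sum_list (take (count_list w t) (As'!t)))"
    using Cons.IH[of As'] Cons.prems(1) IHp l by auto
  have "sum_list (interleave (x#w) As) = y + (\<Sum>t<length As. sum_list (take (count_list w t) (As'!t)))"
    using IH yys by (simp add: As'_def)
  also have "(\<Sum>t<length As. sum_list (take (count_list w t) (As'!t)))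
     = sum_list (take (count_list w x) (As'!x)) + (\<Sum>t\<in>{..<length As}-{x}. sum_list (take (count_list w t) (As'!t)))"
    using x by (simp add: sum.remove)
  also have "(\<Sum>t\<in>{..<length As}-{x}. sum_list (take (count_list w t) (As'!t)))
     = (\<Sum>t\<in>{..<length As}-{x}. sum_list (take (count_list (x#w) t) (As!t)))"
    by (intro sum.cong) (auto simp: As'_def)
  also have "y + (sum_list (take (count_list w x) (As'!x)) + \<dots>)
      = sum_list (take (count_list (x#w) x) (As!x)) + \<dots>"
    using yys x by (simp add: As'_def)
  also have "\<dots> = (\<Sum>t<length As. sum_list (take (count_list (x#w) t) (As!t)))"
    using x by (simp add: sum.remove)
  finally show ?case .
qed

lemma Sigma_seq_nth: "k < length s + 1 \<Longrightarrow> Sigma_seq s e ! k = e + sum_list (take k s)"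
  by (simp add: Sigma_seq_def del: upt_Suc)

lemma pure_Sigma_seq:
  "pure (Sigma_seq s e) i j = (if i \<le> length s \<and> j = e + sum_list (take i s)
     then (\<Prod>k\<in>{0..<length s + 1}-{i}. 1 / of_int \<bar>sum_list (take i s) - sum_list (take k s)\<bar>) else 0)"
proof -
  have l: "length (Sigma_seq s e) = length s + 1" by (simp add: Sigma_seq_def)
  show ?thesis unfolding pure_def l
    by (auto simp: Sigma_seq_nth intro!: prod.cong)
qed


definition V :: "int list list \<Rightarrow> nat list \<Rightarrow> nat \<Rightarrow> int" where
  "V ds w k = (\<Sum>t<length ds. ds!t!(count_list (take k w) t))"

lemma shuffle_words_Wd: "shuffle_words (map Delta ds) = Wd (length ds) (\<lambda>t. length (ds!t) - 1)"
  by (auto simp: shuffle_words_def Wd_def)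

lemma count_take_le: "count_list (take k w) t \<le> count_list w t"
proof -
  have "count_list w t = count_list (take k w) t + count_list (drop k w) t"
    by (metis append_take_drop_id count_list_append)
  then show ?thesis by simp
qed

lemma ds_nonempty: "\<forall>x\<in>set ds. degree_seq x \<Longrightarrow> t < length ds \<Longrightarrow> ds!t \<noteq> []"
  by (simp add: degree_seq_def)

lemma Wd_count_lt:
  assumes "\<forall>x\<in>set ds. degree_seq x" "w \<in> Wd (length ds) (\<lambda>t. length (ds!t) - 1)" "t < length ds"
  shows "count_list (take k w) t < length (ds!t)"
proof -
  have "count_list (take k w) t \<le> length (ds!t) - 1"
    using count_take_le[of k w t] assms(2,3) by (auto simp: Wd_def)
  moreover have "ds!t \<noteq> []" using ds_nonempty assms by blast
  ultimately show ?thesis by (cases "ds!t") auto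
qed

lemma V_interleave:
  assumes ds: "\<forall>x\<in>set ds. degree_seq x" and w: "w \<in> Wd (length ds) (\<lambda>t. length (ds!t) - 1)"
  shows "sum_list (map hd ds) + sum_list (take k (interleave w (map Delta ds))) = V ds w k"
proof -
  let ?As = "map Delta ds"
  have st: "set (take k w) \<subseteq> {..<length ?As}" using w by (auto simp: Wd_def dest: in_set_takeD)
  have ct: "\<forall>t<length ?As. count_list (take k w) t \<le> length (?As!t)"
    using w count_take_le[of k w] by (auto simp: Wd_def) (metis diff_Suc_1)
  have "sum_list (take k (interleave w ?As)) = (\<Sum>t<length ds. sum_list (take (count_list (take k w) t) (Delta (ds!t))))"
    unfolding take_interleave using sum_interleave[OF st ct] by simp
  also have "\<dots> = (\<Sum>t<length ds. ds!t!(count_list (take k w) t) - ds!t!0)"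
    by (intro sum.cong refl sum_take_Delta Wd_count_lt[OF ds w]) simp
  finally have 1: "sum_list (take k (interleave w ?As)) = \<dots>" .
  have "sum_list (map hd ds) = (\<Sum>t<length ds. ds!t!0)"
    unfolding sum_list_sum_nth by (simp add: atLeast0LessThan hd_conv_nth ds_nonempty[OF ds])
  with 1 show ?thesis unfolding V_def by (simp add: sum_subtractf)
qed

lemma V_step:
  assumes ds: "\<forall>x\<in>set ds. degree_seq x" and w: "w \<in> Wd (length ds) (\<lambda>t. length (ds!t) - 1)"
    and k: "k < length w"
  shows "V ds w k < V ds w (Suc k)"
proof -
  define t0 where "t0 = w!k"
  have t0: "t0 < length ds" using w k unfolding t0_def Wd_def by (auto dest!: nth_mem)
  define c where "c = count_list (take k w) t0"
  have tk: "take (Suc k) w = take k w @ [t0]" using k by (simp add: take_Suc_conv_app_nth t0_def)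
  have c1: "c + 1 < length (ds!t0)"
    using Wd_count_lt[OF ds w t0, of "Suc k"] unfolding tk c_def by simp
  have "V ds w (Suc k) = (\<Sum>t<length ds. ds!t!(count_list (take k w) t) + (if t = t0 then ds!t0!(c+1) - ds!t0!c else 0))"
    unfolding V_def tk by (intro sum.cong) (auto simp: c_def)
  also have "\<dots> = V ds w k + (ds!t0!(c+1) - ds!t0!c)"
    using t0 by (simp add: sum.distrib V_def)
  finally have "V ds w (Suc k) = V ds w k + (ds!t0!(c+1) - ds!t0!c)" .
  moreover have "ds!t0!c < ds!t0!(c+1)"
    using ds t0 c1 by (intro sorted_wrt_nth_less[where P="(<)"]) (auto simp: degree_seq_def)
  ultimately show ?thesis by simp
qed

lemma V_mono:
  assumes ds: "\<forall>x\<in>set ds. degree_seq x" and w: "w \<in> Wd (length ds) (\<lambda>t. length (ds!t) - 1)"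
  shows "k < l \<Longrightarrow> l \<le> length w \<Longrightarrow> V ds w k < V ds w l"
proof (induction l)
  case 0 then show ?case by simp
next
  case (Suc l)
  have s: "V ds w l < V ds w (Suc l)" using V_step[OF ds w] Suc.prems by simp
  show ?case
  proof (cases "k = l")
    case True then show ?thesis using s by simp
  next
    case False then show ?thesis using Suc s by simp
  qed
qed


lemma pv_split:
  assumes d: "sorted_wrt (<) d" and a: "a < length d"
  shows "pv d a = (\<Prod>m\<in>{1..a}. 1 / of_int (d!a - d!(a-m))) * (\<Prod>m\<in>{1..length d - 1 - a}. 1 / of_int (d!(a+m) - d!a))"
proof -
  have S: "{0..<length d}-{a} = (\<lambda>m. a-m) ` {1..a} \<union> (\<lambda>m. a+m) ` {1..length d - 1 - a}"
  proof (intro equalityI subsetI)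
    fix x assume x: "x \<in> {0..<length d}-{a}"
    show "x \<in> (\<lambda>m. a-m) ` {1..a} \<union> (\<lambda>m. a+m) ` {1..length d - 1 - a}"
    proof (cases "x < a")
      case True
      then have "x = a - (a - x)" "a - x \<in> {1..a}" by auto
      then show ?thesis by blast
    next
      case False
      then have "x = a + (x - a)" "x - a \<in> {1..length d - 1 - a}" using x by auto
      then show ?thesis by blast
    qed
  qed (use a in auto)
  have disj: "(\<lambda>m. a-m) ` {1..a} \<inter> (\<lambda>m. a+m) ` {1..length d - 1 - a} = {}" by auto
  have "pv d a = (\<Prod>l\<in>(\<lambda>m. a-m) ` {1..a}. 1 / of_int \<bar>d!a - d!l\<bar>) * (\<Prod>l\<in>(\<lambda>m. a+m) ` {1..length d - 1 - a}. 1 / of_int \<bar>d!a - d!l\<bar>)"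
    unfolding pv_def S by (rule prod.union_disjoint) (use disj in auto)
  also have "(\<Prod>l\<in>(\<lambda>m. a-m) ` {1..a}. 1 / of_int \<bar>d!a - d!l\<bar>) = (\<Prod>m\<in>{1..a}. 1 / of_int (d!a - d!(a-m)))"
  proof (subst prod.reindex)
    show "inj_on (\<lambda>m. a-m) {1..a}" by (auto simp: inj_on_def)
    have "\<bar>d!a - d!(a-m)\<bar> = d!a - d!(a-m)" if "m \<in> {1..a}" for m
      using sorted_wrt_nth_less[OF d, of "a-m" a] that a by auto
    then show "prod ((\<lambda>l. 1 / of_int \<bar>d!a - d!l\<bar>) \<circ> (\<lambda>m. a-m)) {1..a} = (\<Prod>m\<in>{1..a}. 1 / of_int (d!a - d!(a-m)))"
      by (intro prod.cong) auto
  qed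
  also have "(\<Prod>l\<in>(\<lambda>m. a+m) ` {1..length d - 1 - a}. 1 / of_int \<bar>d!a - d!l\<bar>) = (\<Prod>m\<in>{1..length d - 1 - a}. 1 / of_int (d!(a+m) - d!a))"
  proof (subst prod.reindex)
    show "inj_on (\<lambda>m. a+m) {1..length d - 1 - a}" by (auto simp: inj_on_def)
    have "\<bar>d!a - d!(a+m)\<bar> = d!(a+m) - d!a" if "m \<in> {1..length d - 1 - a}" for m
    proof -
      have "a + m < length d" using that a by auto
      then have "d!a < d!(a+m)" using sorted_wrt_nth_less[OF d, of a "a+m"] that by auto
      then show ?thesis by simp
    qed
    then show "prod ((\<lambda>l. 1 / of_int \<bar>d!a - d!l\<bar>) \<circ> (\<lambda>m. a+m)) {1..length d - 1 - a} = (\<Prod>m\<in>{1..length d - 1 - a}. 1 / of_int (d!(a+m) - d!a))"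
      by (intro prod.cong) auto
  qed
  finally show ?thesis .
qed


definition T :: "int list list \<Rightarrow> nat list \<Rightarrow> nat \<Rightarrow> rat" where
  "T ds w i = (\<Prod>k\<in>{0..<length w + 1}-{i}. 1 / of_int \<bar>V ds w i - V ds w k\<bar>)"

definition cntv :: "int list list \<Rightarrow> nat list \<Rightarrow> nat \<Rightarrow> nat list" where
  "cntv ds w i = map (\<lambda>t. count_list (take i w) t) [0..<length ds]"

lemma sum_list_nth_lessThan: "sum_list (a::nat list) = (\<Sum>t<length a. a!t)"
  unfolding sum_list_sum_nth by (simp add: atLeast0LessThan)

lemma fine:
  assumes ds: "\<forall>x\<in>set ds. degree_seq x" and a: "a \<in> BX ds i j"
  shows "(\<Sum>w\<in>{w\<in>Wd (length ds) (\<lambda>t. length (ds!t) - 1). cntv ds w i = a}. T ds w i)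
       = (\<Prod>t<length ds. pv (ds!t) (a!t))"
proof -
  define r where "r = length ds"
  define W where "W = Wd r (\<lambda>t. length (ds!t) - 1)"
  define ca where "ca t = a!t" for t
  define cb where "cb t = length (ds!t) - 1 - a!t" for t
  have la: "length a = r" and alt: "\<forall>t<r. a!t < length (ds!t)" and sa: "sum_list a = i"
    using a by (auto simp: BX_def r_def)
  have sumca: "(\<Sum>t<r. ca t) = i" using sa la by (simp add: sum_list_nth_lessThan ca_def)
  have sorted: "sorted_wrt (<) (ds!t)" if "t < r" for t using ds that by (auto simp: degree_seq_def r_def)
  have ds_lt: "ds!t!x < ds!t!y" if "t < r" "x < y" "y < length (ds!t)" for t x y
    using sorted_wrt_nth_less[OF sorted[OF that(1)] that(2,3)] .
  have seteq: "{w\<in>W. cntv ds w i = a} = (\<lambda>(u,v). u@v) ` (Wd r ca \<times> Wd r cb)"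
  proof (intro equalityI subsetI)
    fix w assume w: "w \<in> {w\<in>W. cntv ds w i = a}"
    have cu: "count_list (take i w) t = a!t" if "t < r" for t
    proof -
      have "cntv ds w i ! t = a!t" using w by simp
      then show ?thesis using that by (simp add: cntv_def r_def)
    qed
    have "take i w \<in> Wd r ca" using w cu by (auto simp: Wd_def W_def ca_def dest: in_set_takeD)
    moreover have "drop i w \<in> Wd r cb"
    proof -
      have "count_list (drop i w) t = cb t" if "t < r" for t
      proof -
        have "count_list w t = count_list (take i w) t + count_list (drop i w) t"
          by (metis append_take_drop_id count_list_append)
        then show ?thesis using w that cu by (simp add: W_def Wd_def cb_def)
      qed
      then show ?thesis using w by (auto simp: Wd_def W_def dest: in_set_dropD)
    qed
    ultimately show "w \<in> (\<lambda>(u,v). u@v) ` (Wd r ca \<times> Wd r cb)"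
      by (metis (no_types, lifting) SigmaI append_take_drop_id case_prod_conv image_eqI)
  next
    fix w assume "w \<in> (\<lambda>(u,v). u@v) ` (Wd r ca \<times> Wd r cb)"
    then obtain u v where w: "w = u@v" and u: "u \<in> Wd r ca" and v: "v \<in> Wd r cb" by auto
    have lu: "length u = i" using Wd_length[OF u] sumca by simp
    have "w \<in> W"
      using u v alt unfolding w W_def Wd_def ca_def cb_def by auto
    moreover have "cntv ds w i = a"
      using u lu la unfolding w cntv_def by (auto simp: Wd_def ca_def r_def intro: nth_equalityI)
    ultimately show "w \<in> {w\<in>W. cntv ds w i = a}" by simp
  qed
  have inj: "inj_on (\<lambda>(u,v). u@v) (Wd r ca \<times> Wd r cb)"
  proof (rule inj_onI, clarify)
    fix u v u' v' assume "u \<in> Wd r ca" "u' \<in> Wd r ca" "u @ v = u' @ v'"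
    moreover have "length u = length u'" using Wd_length \<open>u \<in> Wd r ca\<close> \<open>u' \<in> Wd r ca\<close> by metis
    ultimately show "u = u' \<and> v = v'" by simp
  qed
  define g where "g t m = (of_int (ds!t!(a!t+m) - ds!t!(a!t)) :: rat)" for t m
  define T1 where "T1 u = (\<Prod>k<i. 1 / (of_int (V ds u i - V ds u k) :: rat))" for u
  define T2 where "T2 v = (\<Prod>m\<in>{1..length v}. 1 / (\<Sum>t<r. g t (count_list (take m v) t)))" for v
  have split: "T ds (u@v) i = T1 u * T2 v" if u: "u \<in> Wd r ca" and v: "v \<in> Wd r cb" for u v
  proof -
    define w where "w = u@v"
    have wW: "w \<in> W" using seteq u v unfolding w_def by blast
    then have wW': "w \<in> Wd (length ds) (\<lambda>t. length (ds!t) - 1)" by (simp add: W_def r_def)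
    have lu: "length u = i" using Wd_length[OF u] sumca by simp
    have lw: "length w = i + length v" using lu by (simp add: w_def)
    have idx: "{0..<length w + 1}-{i} = {..<i} \<union> (\<lambda>m. i+m) ` {1..length v}"
    proof (intro equalityI subsetI)
      fix x assume x: "x \<in> {0..<length w + 1}-{i}"
      show "x \<in> {..<i} \<union> (\<lambda>m. i+m) ` {1..length v}"
      proof (cases "x < i")
        case False
        then have "x = i + (x - i)" "x - i \<in> {1..length v}" using x lw by auto
        then show ?thesis by blast
      qed simp
    qed (use lw in auto)
    have Vk: "V ds w k = V ds u k" if "k \<le> i" for k
      unfolding V_def w_def using that lu by simp
    have "T ds w i = (\<Prod>k<i. 1 / of_int \<bar>V ds w i - V ds w k\<bar>) * (\<Prod>k\<in>(\<lambda>m. i+m) ` {1..length v}. 1 / of_int \<bar>V ds w i - V ds w k\<bar>)"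
      unfolding T_def idx by (rule prod.union_disjoint) auto
    also have "(\<Prod>k<i. 1 / of_int \<bar>V ds w i - V ds w k\<bar>) = T1 u"
      unfolding T1_def
    proof (intro prod.cong refl)
      fix k assume k: "k \<in> {..<i}"
      have "V ds w k < V ds w i" using V_mono[OF ds wW'] k lw by simp
      then show "1 / of_int \<bar>V ds w i - V ds w k\<bar> = 1 / (of_int (V ds u i - V ds u k) :: rat)"
        using Vk k by simp
    qed
    also have "(\<Prod>k\<in>(\<lambda>m. i+m) ` {1..length v}. 1 / of_int \<bar>V ds w i - V ds w k\<bar>) = T2 v"
      unfolding T2_def
    proof (subst prod.reindex, simp add: inj_on_def, intro prod.cong refl)
      fix m assume m: "m \<in> {1..length v}"
      have "V ds w i < V ds w (i+m)" using V_mono[OF ds wW'] m lw by simp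
      moreover have "V ds w (i+m) = (\<Sum>t<r. ds!t!(a!t + count_list (take m v) t))"
        unfolding V_def w_def using lu u by (auto simp: r_def Wd_def ca_def intro!: sum.cong)
      moreover have "V ds w i = (\<Sum>t<r. ds!t!(a!t))"
        unfolding V_def w_def using lu u by (auto simp: r_def Wd_def ca_def intro!: sum.cong)
      ultimately have "\<bar>V ds w i - V ds w (i+m)\<bar> = (\<Sum>t<r. ds!t!(a!t + count_list (take m v) t) - ds!t!(a!t))"
        by (simp add: sum_subtractf)
      then have "(of_int \<bar>V ds w i - V ds w (i+m)\<bar> :: rat) = (\<Sum>t<r. g t (count_list (take m v) t))"
        by (simp add: g_def of_int_sum)
      then show "((\<lambda>k. 1 / of_int \<bar>V ds w i - V ds w k\<bar>) \<circ> (\<lambda>m. i+m)) m = 1 / (\<Sum>t<r. g t (count_list (take m v) t))"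
        by simp
    qed
    finally show ?thesis unfolding w_def .
  qed
  have sumT2: "(\<Sum>v\<in>Wd r cb. T2 v) = (\<Prod>t<r. \<Prod>m\<in>{1..cb t}. 1 / g t m)"
    unfolding T2_def
  proof (rule chen)
    show "\<forall>t<r. g t 0 = 0" by (simp add: g_def)
    show "\<forall>t<r. \<forall>k. 1 \<le> k \<and> k \<le> cb t \<longrightarrow> 0 < g t k"
    proof (intro allI impI)
      fix t k assume t: "t < r" and k: "1 \<le> k \<and> k \<le> cb t"
      have "ds!t!(a!t) < ds!t!(a!t+k)" using k alt t by (intro ds_lt) (auto simp: cb_def)
      then show "0 < g t k" by (simp add: g_def)
    qed
  qed
  define g' where "g' t m = (of_int (ds!t!(a!t) - ds!t!(a!t - m)) :: rat)" for t m
  have T1rev: "T1 (rev u) = (\<Prod>m\<in>{1..length u}. 1 / (\<Sum>t<r. g' t (count_list (take m u) t)))"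
    if u: "u \<in> Wd r ca" for u
  proof -
    have lu: "length u = i" using Wd_length[OF u] sumca by simp
    have idx: "{..<i} = (\<lambda>m. i - m) ` {1..i}"
    proof (intro equalityI subsetI)
      fix x assume "x \<in> {..<i}"
      then have "x = i - (i - x)" "i - x \<in> {1..i}" by auto
      then show "x \<in> (\<lambda>m. i - m) ` {1..i}" by blast
    qed auto
    have Vi: "V ds (rev u) i = (\<Sum>t<r. ds!t!(a!t))"
      unfolding V_def using lu u by (auto simp: r_def Wd_def ca_def intro!: sum.cong)
    have Vm: "V ds (rev u) (i - m) = (\<Sum>t<r. ds!t!(a!t - count_list (take m u) t))" if m: "m \<in> {1..i}" for m
    proof -
      have "take (i - m) (rev u) = rev (drop m u)" using m lu by (simp add: take_rev)
      moreover have "count_list (drop m u) t = a!t - count_list (take m u) t" if "t < r" for t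
      proof -
        have "count_list u t = count_list (take m u) t + count_list (drop m u) t"
          by (metis append_take_drop_id count_list_append)
        then show ?thesis using u that by (simp add: Wd_def ca_def)
      qed
      ultimately show ?thesis unfolding V_def r_def by (intro sum.cong) auto
    qed
    have "T1 (rev u) = (\<Prod>m\<in>{1..i}. 1 / (of_int (V ds (rev u) i - V ds (rev u) (i - m)) :: rat))"
      unfolding T1_def idx by (subst prod.reindex) (auto simp: inj_on_def)
    also have "\<dots> = (\<Prod>m\<in>{1..i}. 1 / (\<Sum>t<r. g' t (count_list (take m u) t)))"
    proof (intro prod.cong refl)
      fix m assume m: "m \<in> {1..i}"
      have "V ds (rev u) i - V ds (rev u) (i - m) = (\<Sum>t<r. ds!t!(a!t) - ds!t!(a!t - count_list (take m u) t))"
        using Vi Vm[OF m] by (simp add: sum_subtractf)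
      then show "1 / (of_int (V ds (rev u) i - V ds (rev u) (i - m)) :: rat) = 1 / (\<Sum>t<r. g' t (count_list (take m u) t))"
        by (simp add: g'_def of_int_sum)
    qed
    finally show ?thesis using lu by simp
  qed
  have sumT1: "(\<Sum>u\<in>Wd r ca. T1 u) = (\<Prod>t<r. \<Prod>m\<in>{1..ca t}. 1 / g' t m)"
  proof -
    have "(\<Sum>u\<in>Wd r ca. T1 u) = (\<Sum>u\<in>Wd r ca. T1 (rev u))"
      by (rule sum.reindex_bij_witness[of _ rev rev]) (auto simp: Wd_def)
    also have "\<dots> = (\<Sum>u\<in>Wd r ca. \<Prod>m\<in>{1..length u}. 1 / (\<Sum>t<r. g' t (count_list (take m u) t)))"
      using T1rev by simp
    also have "\<dots> = (\<Prod>t<r. \<Prod>m\<in>{1..ca t}. 1 / g' t m)"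
    proof (rule chen)
      show "\<forall>t<r. g' t 0 = 0" by (simp add: g'_def)
      show "\<forall>t<r. \<forall>k. 1 \<le> k \<and> k \<le> ca t \<longrightarrow> 0 < g' t k"
      proof (intro allI impI)
        fix t k assume t: "t < r" and k: "1 \<le> k \<and> k \<le> ca t"
        have "ds!t!(a!t - k) < ds!t!(a!t)" using k alt t by (intro ds_lt) (auto simp: ca_def)
        then show "0 < g' t k" by (simp add: g'_def)
      qed
    qed
    finally show ?thesis .
  qed
  have pvs: "(\<Prod>t<r. pv (ds!t) (a!t)) = (\<Prod>t<r. \<Prod>m\<in>{1..ca t}. 1 / g' t m) * (\<Prod>t<r. \<Prod>m\<in>{1..cb t}. 1 / g t m)"
    unfolding prod.distrib[symmetric]
  proof (intro prod.cong refl)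
    fix t assume t: "t \<in> {..<r}"
    show "pv (ds!t) (a!t) = (\<Prod>m\<in>{1..ca t}. 1 / g' t m) * (\<Prod>m\<in>{1..cb t}. 1 / g t m)"
      using pv_split[OF sorted, of t "a!t"] t alt by (simp add: ca_def cb_def g_def g'_def)
  qed
  have "(\<Sum>w\<in>{w\<in>W. cntv ds w i = a}. T ds w i) = (\<Sum>(u,v)\<in>Wd r ca \<times> Wd r cb. T ds (u@v) i)"
    unfolding seteq by (subst sum.reindex[OF inj]) (simp add: case_prod_unfold)
  also have "\<dots> = (\<Sum>(u,v)\<in>Wd r ca \<times> Wd r cb. T1 u * T2 v)"
    using split by (intro sum.cong) auto
  also have "\<dots> = (\<Sum>u\<in>Wd r ca. T1 u) * (\<Sum>v\<in>Wd r cb. T2 v)"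
    by (simp add: sum_product sum.cartesian_product)
  also have "\<dots> = (\<Prod>t<r. pv (ds!t) (a!t))" using sumT1 sumT2 pvs by simp
  finally show ?thesis unfolding W_def r_def .
qed


lemma RHS:
  assumes ds: "\<forall>x\<in>set ds. degree_seq x"
  shows "(\<Sum>w \<in> shuffle_words (map Delta ds).
            pure (Sigma_seq (interleave w (map Delta ds)) (sum_list (map hd ds))) i j)
       = (\<Sum>a\<in>BX ds i j. \<Prod>t<length ds. pv (ds!t) (a!t))"
proof -
  define W where "W = Wd (length ds) (\<lambda>t. length (ds!t) - 1)"
  define P where "P w \<longleftrightarrow> i \<le> length w \<and> V ds w i = j" for w
  have summand: "pure (Sigma_seq (interleave w (map Delta ds)) (sum_list (map hd ds))) i j
      = (if P w then T ds w i else 0)" if w: "w \<in> W" for w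
  proof -
    let ?s = "interleave w (map Delta ds)" and ?e = "sum_list (map hd ds)"
    have VI: "?e + sum_list (take k ?s) = V ds w k" for k
      using V_interleave[OF ds] w unfolding W_def by blast
    have d: "sum_list (take i ?s) - sum_list (take k ?s) = V ds w i - V ds w k" for k
      using VI[of i] VI[of k] by linarith
    show ?thesis unfolding pure_Sigma_seq P_def T_def using VI[of i] d by auto
  qed
  have "(\<Sum>w \<in> shuffle_words (map Delta ds). pure (Sigma_seq (interleave w (map Delta ds)) (sum_list (map hd ds))) i j)
      = (\<Sum>w\<in>W. if P w then T ds w i else 0)"
    unfolding shuffle_words_Wd W_def[symmetric] using summand by (intro sum.cong) auto
  also have "\<dots> = (\<Sum>w\<in>{w\<in>W. P w}. T ds w i)"
    by (rule sum.inter_filter[symmetric]) (simp add: W_def Wd_finite)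
  also have "\<dots> = (\<Sum>a\<in>BX ds i j. \<Sum>w\<in>{w. w \<in> {w\<in>W. P w} \<and> cntv ds w i = a}. T ds w i)"
  proof (rule sum.group[symmetric])
    show "finite {w\<in>W. P w}" by (simp add: W_def Wd_finite)
    show "finite (BX ds i j)" by (rule BX_finite)
    show "(\<lambda>w. cntv ds w i) ` {w\<in>W. P w} \<subseteq> BX ds i j"
    proof clarify
      fix w assume w: "w \<in> W" and Pw: "P w"
      have st: "set (take i w) \<subseteq> {..<length ds}" using w by (auto simp: W_def Wd_def dest: in_set_takeD)
      have "sum_list (cntv ds w i) = (\<Sum>t<length ds. count_list (take i w) t)"
        unfolding sum_list_nth_lessThan by (simp add: cntv_def)
      also have "\<dots> = i" using count_sum[OF st] Pw by (simp add: P_def)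
      finally have "sum_list (cntv ds w i) = i" .
      moreover have "(\<Sum>t<length ds. ds!t!(cntv ds w i!t)) = j"
        using Pw by (simp add: P_def V_def cntv_def)
      moreover have "\<forall>t<length ds. cntv ds w i ! t < length (ds!t)"
        using Wd_count_lt[OF ds] w by (simp add: cntv_def W_def)
      ultimately show "cntv ds w i \<in> BX ds i j" by (simp add: BX_def cntv_def)
    qed
  qed
  also have "\<dots> = (\<Sum>a\<in>BX ds i j. \<Prod>t<length ds. pv (ds!t) (a!t))"
  proof (intro sum.cong refl)
    fix a assume a: "a \<in> BX ds i j"
    have "{w. w \<in> {w\<in>W. P w} \<and> cntv ds w i = a} = {w\<in>W. cntv ds w i = a}"
    proof (intro equalityI subsetI)
      fix w assume "w \<in> {w\<in>W. cntv ds w i = a}"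
      then have w: "w \<in> W" and c: "cntv ds w i = a" by auto
      have st: "set (take i w) \<subseteq> {..<length ds}" using w by (auto simp: W_def Wd_def dest: in_set_takeD)
      have "sum_list a = i" "(\<Sum>t<length ds. ds!t!(a!t)) = j" using a by (auto simp: BX_def)
      moreover have "sum_list (cntv ds w i) = length (take i w)"
        unfolding sum_list_nth_lessThan using count_sum[OF st] by (simp add: cntv_def)
      moreover have "(\<Sum>t<length ds. ds!t!(cntv ds w i!t)) = V ds w i"
        by (simp add: V_def cntv_def)
      ultimately have "P w" using c by (auto simp: P_def)
      then show "w \<in> {w. w \<in> {w\<in>W. P w} \<and> cntv ds w i = a}" using w c by simp
    qed auto
    then show "(\<Sum>w\<in>{w. w \<in> {w\<in>W. P w} \<and> cntv ds w i = a}. T ds w i) = (\<Prod>t<length ds. pv (ds!t) (a!t))"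
      using fine[OF ds a] by (simp add: W_def)
  qed
  finally show ?thesis .
qed

theorem theorem5p2:
  fixes c d :: "int list" and ds :: "int list list"
  assumes "degree_seq c" and "degree_seq d"
    and "ds \<noteq> []" and "\<forall>x \<in> set ds. degree_seq x"
  shows "(\<forall>i j. dprod (pure c) (pure d) i j =
            (\<Sum>w \<in> shuffle_words [Delta c, Delta d].
               pure (Sigma_seq (interleave w [Delta c, Delta d]) (hd c + hd d)) i j))
       \<and> (\<forall>i j. dprod_list (map pure ds) i j =
            (\<Sum>w \<in> shuffle_words (map Delta ds).
               pure (Sigma_seq (interleave w (map Delta ds)) (sum_list (map hd ds))) i j))"
proof
  have gen: "dprod_list (map pure ds') i j =
            (\<Sum>w \<in> shuffle_words (map Delta ds').
               pure (Sigma_seq (interleave w (map Delta ds')) (sum_list (map hd ds'))) i j)"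
    if "\<forall>x \<in> set ds'. degree_seq x" for ds' i j
    using LHS RHS[OF that] by simp
  show "\<forall>i j. dprod_list (map pure ds) i j =
            (\<Sum>w \<in> shuffle_words (map Delta ds).
               pure (Sigma_seq (interleave w (map Delta ds)) (sum_list (map hd ds))) i j)"
    using gen assms(4) by blast
  have unit: "dprod (pure d) dunit = pure d"
  proof (intro ext)
    fix i j
    have "dprod (pure d) dunit i j = (\<Sum>k | k < length d \<and> k \<le> i. pv d k * dunit (i-k) (j - d!k))"
      by (rule dprod_pure)
    also have "\<dots> = (\<Sum>k | k < length d \<and> k \<le> i. if k = i then (if j = d!k then pv d k else 0) else 0)"
      by (intro sum.cong) (auto simp: dunit_def)
    also have "\<dots> = pure d i j" by (simp add: pure_eq)
    finally show "dprod (pure d) dunit i j = pure d i j" .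
  qed
  have cd: "dprod (pure c) (pure d) = dprod_list (map pure [c, d])"
    by (simp add: dprod_list_def unit)
  show "\<forall>i j. dprod (pure c) (pure d) i j =
            (\<Sum>w \<in> shuffle_words [Delta c, Delta d].
               pure (Sigma_seq (interleave w [Delta c, Delta d]) (hd c + hd d)) i j)"
    using gen[of "[c, d]"] assms(1,2) unfolding cd by simp
qed

end
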